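(* Let $K,F$ be non-negative integers. Then there exists at least one numerical semigroup $S$ with $\mathrm{F}(S)=F$ and $\mathrm{l}(S)=K$ if and only if $K+F$ is odd and $F\ge K+1$.
   Context: A numerical semigroup is a subset $S\subseteq\mathbb{N}$ closed under addition with $0\in S$ and $\mathbb{N}\setminus S$ finite; $\mathrm{F}(S)=\max(\mathbb{Z}\setminus S)$. $\mathrm{N}(S)=\{s\in S\mid s<\mathrm{F}(S)\}$, $\mathrm{L}(S)=\{x\in\mathbb{N}\setminus S\mid \mathrm{F}(S)-x\notin \mathrm{N}(S)\}$, $\mathrm{l}(S)=\#\mathrm{L}(S)$. *)

theory Defs
  imports Main
begin

definition numerical_semigroup :: "nat set \<Rightarrow> bool" where
  "numerical_semigroup S \<longleftrightarrow> 0 \<in> S \<and> (\<forall>x\<in>S. \<forall>y\<in>S. x + y \<in> S) \<and> finite (UNIV - S)"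

definition frob :: "nat set \<Rightarrow> int" where
  "frob S = (GREATEST z::int. z \<notin> int ` S)"

definition Nset :: "nat set \<Rightarrow> nat set" where
  "Nset S = {s \<in> S. int s < frob S}"

definition Lset :: "nat set \<Rightarrow> nat set" where
  "Lset S = {x \<in> UNIV - S. frob S - int x \<notin> int ` Nset S}"

definition lnum :: "nat set \<Rightarrow> nat" where
  "lnum S = card (Lset S)"

end

theory Submission
  imports Defs
begin

lemma frob_Max:
  assumes ns: "numerical_semigroup S" and ne: "UNIV - S \<noteq> {}"
  shows "frob S = int (Max (UNIV - S))"
proof -
  have fin: "finite (UNIV - S)" using ns unfolding numerical_semigroup_def by blast
  let ?m = "Max (UNIV - S)"
  have m: "?m \<in> UNIV - S" using fin ne by (rule Max_in)
  show ?thesis unfolding frob_def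
  proof (rule Greatest_equality)
    show "int ?m \<notin> int ` S" using m by auto
  next
    fix y :: int assume y: "y \<notin> int ` S"
    show "y \<le> int ?m"
    proof (cases "y < 0")
      case True then show ?thesis by simp
    next
      case False
      then obtain n where n: "y = int n" by (metis nonneg_int_cases not_less)
      then have "n \<in> UNIV - S" using y by auto
      then have "n \<le> ?m" using fin by simp
      then show ?thesis using n by simp
    qed
  qed
qed

lemma frob_facts:
  assumes ns: "numerical_semigroup S" and fr: "frob S = int F"
  shows "F \<notin> S" "\<And>y. y > F \<Longrightarrow> y \<in> S" "F \<ge> 1"
proof -
  have fin: "finite (UNIV - S)" and z: "0 \<in> S" using ns unfolding numerical_semigroup_def by blast+
  have ne: "UNIV - S \<noteq> {}"
  proof
    assume e: "UNIV - S = {}"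
    have "frob S = -1" unfolding frob_def
    proof (rule Greatest_equality)
      show "(-1::int) \<notin> int ` S" by auto
    next
      fix y :: int assume y: "y \<notin> int ` S"
      show "y \<le> -1"
      proof (rule ccontr)
        assume "\<not> y \<le> -1"
        then have "y \<ge> 0" by simp
        then obtain n where "y = int n" using nonneg_int_cases by blast
        then show False using y e by auto
      qed
    qed
    then show False using fr by simp
  qed
  have FM: "F = Max (UNIV - S)" using frob_Max[OF ns ne] fr by simp
  show "F \<notin> S" using FM Max_in[OF fin ne] by simp
  show "\<And>y. y > F \<Longrightarrow> y \<in> S"
  proof (rule ccontr)
    fix y assume "y > F" "y \<notin> S"
    then have "y \<le> F" using FM fin by simp
    with \<open>y > F\<close> show False by simp
  qed
  show "F \<ge> 1" using \<open>F \<notin> S\<close> z by (cases F) auto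
qed

lemma Lset_char:
  assumes ns: "numerical_semigroup S" and fr: "frob S = int F"
  shows "Lset S = {x. 1 \<le> x \<and> x < F \<and> x \<notin> S \<and> F - x \<notin> S}"
proof -
  note ff = frob_facts[OF ns fr]
  have z: "0 \<in> S" using ns unfolding numerical_semigroup_def by blast
  show ?thesis
  proof (rule set_eqI, rule iffI)
    fix x assume x: "x \<in> Lset S"
    then have xs: "x \<notin> S" and nx: "int F - int x \<notin> int ` Nset S"
      unfolding Lset_def fr by auto
    have "x \<noteq> 0" using xs z by (cases x) auto
    moreover have "x \<le> F" using xs ff(2) by (meson not_less)
    moreover have "x \<noteq> F"
    proof
      assume "x = F"
      then have "int F - int x = int 0" by simp
      moreover have "0 \<in> Nset S" unfolding Nset_def fr using z ff(3) by simp
      ultimately show False using nx by blast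
    qed
    moreover have "F - x \<notin> S"
    proof
      assume a: "F - x \<in> S"
      have "F - x < F" using \<open>x \<le> F\<close> \<open>x \<noteq> 0\<close> by simp
      then have m: "F - x \<in> Nset S" unfolding Nset_def fr using a by simp
      have eq: "int F - int x = int (F - x)" using \<open>x \<le> F\<close> by simp
      have "int F - int x \<in> int ` Nset S" unfolding eq using m by (rule imageI)
      then show False using nx by contradiction
    qed
    ultimately show "x \<in> {x. 1 \<le> x \<and> x < F \<and> x \<notin> S \<and> F - x \<notin> S}" using xs by auto
  next
    fix x assume "x \<in> {x. 1 \<le> x \<and> x < F \<and> x \<notin> S \<and> F - x \<notin> S}"
    then have x: "1 \<le> x" "x < F" "x \<notin> S" "F - x \<notin> S" by auto
    have "int F - int x \<notin> int ` Nset S"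
    proof
      assume "int F - int x \<in> int ` Nset S"
      then obtain s where "s \<in> S" "int F - int x = int s" unfolding Nset_def by auto
      then have "s = F - x" using x by linarith
      then show False using \<open>s \<in> S\<close> x by simp
    qed
    then show "x \<in> Lset S" unfolding Lset_def fr using x by auto
  qed
qed

lemma forward:
  assumes ns: "numerical_semigroup S" and fr: "frob S = int F"
  shows "odd (lnum S + F) \<and> F \<ge> lnum S + 1"
proof -
  note ff = frob_facts[OF ns fr]
  have add: "\<And>x y. x \<in> S \<Longrightarrow> y \<in> S \<Longrightarrow> x + y \<in> S" using ns unfolding numerical_semigroup_def by blast
  define L where "L = {x. 1 \<le> x \<and> x < F \<and> x \<notin> S \<and> F - x \<notin> S}"
  define A where "A = {x. 1 \<le> x \<and> x < F \<and> x \<in> S}"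
  define B where "B = {x. 1 \<le> x \<and> x < F \<and> F - x \<in> S}"
  have LL: "lnum S = card L" unfolding lnum_def L_def using Lset_char[OF ns fr] by simp
  have U: "{1..<F} = L \<union> (A \<union> B)" unfolding L_def A_def B_def by auto
  have AB: "A \<inter> B = {}"
  proof (rule ccontr)
    assume "A \<inter> B \<noteq> {}"
    then obtain x where "x \<in> A" "x \<in> B" by auto
    then have "x \<in> S" "F - x \<in> S" "x < F" unfolding A_def B_def by auto
    then have "F \<in> S" using add[of x "F - x"] by simp
    then show False using ff(1) by simp
  qed
  have LAB: "L \<inter> (A \<union> B) = {}" unfolding L_def A_def B_def by auto
  have BA: "B = (\<lambda>x. F - x) ` A"
  proof (rule set_eqI, rule iffI)
    fix x assume "x \<in> B"
    then have "F - x \<in> A" "x = F - (F - x)" unfolding A_def B_def by auto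
    then show "x \<in> (\<lambda>x. F - x) ` A" by blast
  next
    fix x assume "x \<in> (\<lambda>x. F - x) ` A"
    then obtain y where "y \<in> A" "x = F - y" by auto
    then show "x \<in> B" unfolding A_def B_def by auto
  qed
  have inj: "inj_on (\<lambda>x. F - x) A" unfolding A_def inj_on_def by auto
  have finA: "finite A" unfolding A_def by auto
  have finB: "finite B" unfolding B_def by auto
  have finL: "finite L" unfolding L_def by auto
  have cB: "card B = card A" using BA card_image[OF inj] by simp
  have c1: "card {1..<F} = F - 1" by simp
  have "F - 1 = card L + (card A + card B)"
    unfolding c1[symmetric] U using card_Un_disjoint[OF finL _ LAB] card_Un_disjoint[OF finA finB AB] finA finB by simp
  then have "F - 1 = lnum S + 2 * card A" using LL cB by simp
  then have e: "F = lnum S + 2 * card A + 1" using ff(3) by linarith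
  have "lnum S + F = 2 * (lnum S + card A) + 1" using e by simp
  then have "odd (lnum S + F)" by simp
  then show ?thesis using e by simp
qed

theorem proposition37:
  fixes K F :: nat
  shows "(\<exists>S. numerical_semigroup S \<and> frob S = int F \<and> lnum S = K)
         \<longleftrightarrow> odd (K + F) \<and> F \<ge> K + 1"
proof
  assume "\<exists>S. numerical_semigroup S \<and> frob S = int F \<and> lnum S = K"
  then show "odd (K + F) \<and> F \<ge> K + 1" using forward by blast
next
  assume h: "odd (K + F) \<and> F \<ge> K + 1"
  define a where "a = (K + F + 1) div 2"
  have ev: "even (K + F + 1)" using h by simp
  have a2: "2 * a = K + F + 1" unfolding a_def using ev by simp
  have aF: "a \<le> F" using a2 h by linarith
  define S where "S = {x. x = 0 \<or> (a \<le> x \<and> x \<noteq> F)}"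
  have ns: "numerical_semigroup S"
    unfolding numerical_semigroup_def
  proof (intro conjI)
    show "0 \<in> S" unfolding S_def by simp
    show "\<forall>x\<in>S. \<forall>y\<in>S. x + y \<in> S"
    proof (intro ballI)
      fix x y assume "x \<in> S" "y \<in> S"
      then have x: "x = 0 \<or> (a \<le> x \<and> x \<noteq> F)" and y: "y = 0 \<or> (a \<le> y \<and> y \<noteq> F)"
        unfolding S_def by auto
      show "x + y \<in> S"
      proof (cases "x = 0 \<or> y = 0")
        case True then show ?thesis using x y unfolding S_def by auto
      next
        case False
        then have "a \<le> x" "a \<le> y" using x y by auto
        then have "x + y > F" "x + y \<ge> a" using a2 by linarith+
        then show ?thesis unfolding S_def by simp
      qed
    qed
    have "UNIV - S \<subseteq> {..F}" unfolding S_def using aF by auto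
    then show "finite (UNIV - S)" using finite_subset by blast
  qed
  have FS: "F \<in> UNIV - S" unfolding S_def using h by auto
  have fin: "finite (UNIV - S)" using ns unfolding numerical_semigroup_def by blast
  have "Max (UNIV - S) = F"
  proof (rule Max_eqI[OF fin])
    fix y assume "y \<in> UNIV - S" then show "y \<le> F" unfolding S_def using aF by auto
  qed (rule FS)
  then have fr: "frob S = int F" using frob_Max[OF ns] FS by auto
  have "{x. 1 \<le> x \<and> x < F \<and> x \<notin> S \<and> F - x \<notin> S} = {F - a<..<a}"
  proof (rule set_eqI)
    fix x
    show "x \<in> {x. 1 \<le> x \<and> x < F \<and> x \<notin> S \<and> F - x \<notin> S} \<longleftrightarrow> x \<in> {F - a<..<a}"
      unfolding S_def using aF a2 by (simp, linarith)
  qed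
  then have "Lset S = {F - a<..<a}" using Lset_char[OF ns fr] by simp
  then have "lnum S = K" unfolding lnum_def using a2 aF by simp
  then show "\<exists>S. numerical_semigroup S \<and> frob S = int F \<and> lnum S = K" using ns fr by blast
qed

end
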